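(* Let $G$ be a cocomparability graph and $P$ a partial order whose comparability graph is $\overline{G}$. Let $\widetilde G=\widehat C(P)$, let $H$ be the associated split graph of $\widetilde G$ and $H^*$ the conflict graph of $H$. If $\widetilde G$ is linear-interval coverable, then $\chi(H^* )\le 2$.
   Context: For $P$ on $U=\{u_1,\dots,u_n\}$ and a copy $V=\{v_1,\dots,v_n\}$, $\widehat C(P)=(U,V,\widetilde E)$ is the bipartite graph with $u_iv_j\in\widetilde E$ iff NOT $u_i<_Pu_j$. The associated split graph $H$ of a bipartite graph $(U,V,F)$ has vertex set $U\cup V$ and edge set $F$ together with all pairs of distinct vertices of $V$. Two edges $e,e'$ of a graph are in conflict if there are vertices $w_1,\dots,w_4$ (not necessarily distinct) with $e=w_2w_3$, $e'=w_4w_1$ edges and $w_1w_2$, $w_3w_4$ non-edges; the conflict graph $H^*$ has the edges of $H$ as vertices, adjacent iff in conflict. $\chi$ is the chromatic number. A bipartite graph $(U,V,F)$ with $E_0=\{u_iv_i\}\subseteq F$ is linear-interval coverable if $F=E_1\cup E_2$ where $(U,V,E_1),(U,V,E_2)$ are chain graphs (bipartite graphs whose neighborhoods in each color class are totally ordered by inclusion) and $E_0\subseteq E_2\setminus E_1$. *)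

theory Defs
  imports Main
begin

(* Elements of U = {u_0,...,u_(n-1)} are represented by indices 0..<n.
   Vertices of the split graph: Inl i = u_i, Inr j = v_j. *)

definition strict_po_on :: "nat \<Rightarrow> (nat \<Rightarrow> nat \<Rightarrow> bool) \<Rightarrow> bool" where
  "strict_po_on n lt \<longleftrightarrow>
     (\<forall>i<n. \<not> lt i i) \<and>
     (\<forall>i<n. \<forall>j<n. \<forall>k<n. lt i j \<and> lt j k \<longrightarrow> lt i k)"

definition complement_is_comparability ::
  "nat \<Rightarrow> (nat \<Rightarrow> nat \<Rightarrow> bool) \<Rightarrow> (nat \<Rightarrow> nat \<Rightarrow> bool) \<Rightarrow> bool" where
  "complement_is_comparability n G lt \<longleftrightarrow>
     (\<forall>i<n. \<not> G i i) \<and> (\<forall>i<n. \<forall>j<n. G i j \<longleftrightarrow> G j i) \<and>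
     (\<forall>i<n. \<forall>j<n. i \<noteq> j \<longrightarrow> (\<not> G i j \<longleftrightarrow> (lt i j \<or> lt j i)))"

(* hat-C(P): edge u_i v_j iff not u_i <_P u_j; edges as index pairs (i,j) *)
definition hatC :: "nat \<Rightarrow> (nat \<Rightarrow> nat \<Rightarrow> bool) \<Rightarrow> (nat \<times> nat) set" where
  "hatC n lt = {(i, j). i < n \<and> j < n \<and> \<not> lt i j}"

definition chain_graph :: "nat \<Rightarrow> (nat \<times> nat) set \<Rightarrow> bool" where
  "chain_graph n E \<longleftrightarrow>
     E \<subseteq> {0..<n} \<times> {0..<n} \<and>
     (\<forall>i<n. \<forall>i'<n. {j. (i, j) \<in> E} \<subseteq> {j. (i', j) \<in> E} \<or> {j. (i', j) \<in> E} \<subseteq> {j. (i, j) \<in> E}) \<and>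
     (\<forall>j<n. \<forall>j'<n. {i. (i, j) \<in> E} \<subseteq> {i. (i, j') \<in> E} \<or> {i. (i, j') \<in> E} \<subseteq> {i. (i, j) \<in> E})"

definition diag_edges :: "nat \<Rightarrow> (nat \<times> nat) set" where
  "diag_edges n = {(i, i) | i. i < n}"

definition linear_interval_coverable :: "nat \<Rightarrow> (nat \<times> nat) set \<Rightarrow> bool" where
  "linear_interval_coverable n F \<longleftrightarrow>
     diag_edges n \<subseteq> F \<and>
     (\<exists>E1 E2. chain_graph n E1 \<and> chain_graph n E2 \<and> F = E1 \<union> E2 \<and>
              diag_edges n \<subseteq> E2 - E1)"

definition split_vertices :: "nat \<Rightarrow> (nat + nat) set" where
  "split_vertices n = Inl ` {0..<n} \<union> Inr ` {0..<n}"

definition split_edges :: "nat \<Rightarrow> (nat \<times> nat) set \<Rightarrow> (nat + nat) set set" where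
  "split_edges n F =
     {{Inl i, Inr j} | i j. (i, j) \<in> F} \<union>
     {{Inr j, Inr k} | j k. j < n \<and> k < n \<and> j \<noteq> k}"

definition in_conflict :: "'a set \<Rightarrow> 'a set set \<Rightarrow> 'a set \<Rightarrow> 'a set \<Rightarrow> bool" where
  "in_conflict V Ed e e' \<longleftrightarrow>
     e \<in> Ed \<and> e' \<in> Ed \<and>
     (\<exists>w1\<in>V. \<exists>w2\<in>V. \<exists>w3\<in>V. \<exists>w4\<in>V.
        e = {w2, w3} \<and> e' = {w4, w1} \<and>
        w1 \<noteq> w2 \<and> {w1, w2} \<notin> Ed \<and> w3 \<noteq> w4 \<and> {w3, w4} \<notin> Ed)"

definition colorable :: "'b set \<Rightarrow> ('b \<Rightarrow> 'b \<Rightarrow> bool) \<Rightarrow> nat \<Rightarrow> bool" where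
  "colorable V adj k \<longleftrightarrow>
     (\<exists>c. (\<forall>x\<in>V. c x < k) \<and> (\<forall>x\<in>V. \<forall>y\<in>V. adj x y \<longrightarrow> c x \<noteq> c y))"

definition chromatic_number :: "'b set \<Rightarrow> ('b \<Rightarrow> 'b \<Rightarrow> bool) \<Rightarrow> nat" where
  "chromatic_number V adj = (LEAST k. colorable V adj k)"

end

theory Submission
  imports Defs
begin

lemma memLL: "{Inl a, Inl b} \<notin> split_edges n F"
  unfolding split_edges_def by (auto simp: doubleton_eq_iff)

lemma memLR: "({Inl a, Inr b} \<in> split_edges n F) = ((a,b) \<in> F)"
  unfolding split_edges_def by (auto simp: doubleton_eq_iff)

lemma memRL: "({Inr b, Inl a} \<in> split_edges n F) = ((a,b) \<in> F)"
  using memLR by (metis insert_commute)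

lemma memRR: "j < n \<Longrightarrow> k < n \<Longrightarrow> j \<noteq> k \<Longrightarrow> {Inr j, Inr k} \<in> split_edges n F"
  unfolding split_edges_def by auto

lemma VR: "Inr k \<in> split_vertices n \<Longrightarrow> k < n"
  unfolding split_vertices_def by auto

lemma conflict_char:
  assumes "in_conflict (split_vertices n) (split_edges n F) x y"
  shows "\<exists>i j a b. x = {Inl i, Inr j} \<and> y = {Inl a, Inr b} \<and> (i,j) \<in> F \<and> (a,b) \<in> F
           \<and> (i,b) \<notin> F \<and> (a,j) \<notin> F"
proof -
  obtain w1 w2 w3 w4 where w: "w1 \<in> split_vertices n" "w2 \<in> split_vertices n"
    "w3 \<in> split_vertices n" "w4 \<in> split_vertices n"
    "x = {w2, w3}" "y = {w4, w1}" "w1 \<noteq> w2" "{w1, w2} \<notin> split_edges n F"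
    "w3 \<noteq> w4" "{w3, w4} \<notin> split_edges n F"
    and xe: "x \<in> split_edges n F" and ye: "y \<in> split_edges n F"
    using assms unfolding in_conflict_def by blast
  have V: "\<And>w. w \<in> split_vertices n \<Longrightarrow> (\<exists>i. w = Inl i \<and> i < n) \<or> (\<exists>i. w = Inr i \<and> i < n)"
    unfolding split_vertices_def by auto
  show ?thesis
  proof (cases w1)
    case (Inl a)
    show ?thesis
    proof (cases w4)
      case (Inl b)
      then show ?thesis using ye w \<open>w1 = Inl a\<close> memLL by metis
    next
      case (Inr b)
      then have "(a,b) \<in> F" using ye w \<open>w1 = Inl a\<close> memRL by metis
      show ?thesis
      proof (cases w2)
        case (Inl i)
        show ?thesis
        proof (cases w3)
          case (Inl k)
          then show ?thesis using xe w \<open>w2 = Inl i\<close> memLL by metis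
        next
          case (Inr k)
          then have "k < n" "b < n" "k \<noteq> b" using w \<open>w4 = Inr b\<close> VR by auto
          then show ?thesis using w \<open>w4 = Inr b\<close> Inr memRR by metis
        qed
      next
        case (Inr j)
        then have nj: "(a,j) \<notin> F" using w \<open>w1 = Inl a\<close> memLR by metis
        show ?thesis
        proof (cases w3)
          case (Inl i)
          then have "(i,b) \<notin> F" using w \<open>w4 = Inr b\<close> memLR by metis
          moreover have "(i,j) \<in> F" using xe w Inl \<open>w2 = Inr j\<close> memRL by metis
          moreover have "x = {Inl i, Inr j}" using w Inl \<open>w2 = Inr j\<close> by auto
          moreover have "y = {Inl a, Inr b}" using w \<open>w4 = Inr b\<close> \<open>w1 = Inl a\<close> by auto
          ultimately show ?thesis using nj \<open>(a,b) \<in> F\<close> by blast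
        next
          case (Inr k)
          then have "k < n" "b < n" "k \<noteq> b" using w \<open>w4 = Inr b\<close> VR by auto
          then show ?thesis using w \<open>w4 = Inr b\<close> Inr memRR by metis
        qed
      qed
    qed
  next
    case (Inr b)
    show ?thesis
    proof (cases w2)
      case (Inr j)
      then have "j < n" "b < n" "j \<noteq> b" using w \<open>w1 = Inr b\<close> VR by auto
      then show ?thesis using w \<open>w1 = Inr b\<close> Inr memRR by (metis insert_commute)
    next
      case (Inl i)
      have nib: "(i,b) \<notin> F" using w \<open>w1 = Inr b\<close> Inl memRL by metis
      show ?thesis
      proof (cases w4)
        case (Inr k)
        show ?thesis
        proof (cases w3)
          case (Inl m)
          then show ?thesis using xe w \<open>w2 = Inl i\<close> memLL by metis
        next
          case (Inr m)
          then have "k < n" "m < n" "m \<noteq> k" using w \<open>w4 = Inr k\<close> VR by auto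
          then show ?thesis using w \<open>w4 = Inr k\<close> Inr memRR by metis
        qed
      next
        case (Inl a)
        then have ab: "(a,b) \<in> F" using ye w \<open>w1 = Inr b\<close> memLR by metis
        show ?thesis
        proof (cases w3)
          case (Inl k)
          then show ?thesis using xe w \<open>w2 = Inl i\<close> memLL by metis
        next
          case (Inr j)
          then have "(a,j) \<notin> F" using w \<open>w4 = Inl a\<close> memRL by metis
          moreover have "(i,j) \<in> F" using xe w Inr \<open>w2 = Inl i\<close> memLR by metis
          moreover have "x = {Inl i, Inr j}" using w Inr \<open>w2 = Inl i\<close> by auto
          moreover have "y = {Inl a, Inr b}" using w \<open>w4 = Inl a\<close> \<open>w1 = Inr b\<close> by auto
          ultimately show ?thesis using nib ab by blast
        qed
      qed
    qed
  qed
qed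

theorem lemma11:
  fixes n :: nat and G lt :: "nat \<Rightarrow> nat \<Rightarrow> bool"
  assumes "strict_po_on n lt"
    and "complement_is_comparability n G lt"
    and "linear_interval_coverable n (hatC n lt)"
  shows "chromatic_number (split_edges n (hatC n lt))
           (in_conflict (split_vertices n) (split_edges n (hatC n lt))) \<le> 2"
proof -
  define F where "F = hatC n lt"
  obtain E1 E2 where c1: "chain_graph n E1" and c2: "chain_graph n E2" and FE: "F = E1 \<union> E2"
    using assms(3) unfolding linear_interval_coverable_def F_def by blast
  have Fr: "\<And>i j. (i,j) \<in> F \<Longrightarrow> i < n \<and> j < n" unfolding F_def hatC_def by auto
  have nc: "False" if ch: "chain_graph n E" and sub: "E \<subseteq> F" and "(i,j) \<in> E" "(a,b) \<in> E"
     "(i,b) \<notin> F" "(a,j) \<notin> F" for E i j a b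
  proof -
    have "i < n" "a < n" using that Fr by auto
    then have "{j. (i, j) \<in> E} \<subseteq> {j. (a, j) \<in> E} \<or> {j. (a, j) \<in> E} \<subseteq> {j. (i, j) \<in> E}"
      using ch unfolding chain_graph_def by blast
    then show False using that by blast
  qed
  define c where "c = (\<lambda>e. if \<exists>i j. e = {Inl i, Inr j} \<and> (i,j) \<in> E1 then 0 else (1::nat))"
  have cv: "c {Inl i, Inr j} = (if (i,j) \<in> E1 then 0 else 1)" for i j
    unfolding c_def by (auto simp: doubleton_eq_iff)
  have "colorable (split_edges n F) (in_conflict (split_vertices n) (split_edges n F)) 2"
    unfolding colorable_def
  proof (intro exI[of _ c] conjI ballI impI)
    fix x assume "x \<in> split_edges n F" show "c x < 2" unfolding c_def by auto
  next
    fix x y assume "in_conflict (split_vertices n) (split_edges n F) x y"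
    then obtain i j a b where h: "x = {Inl i, Inr j}" "y = {Inl a, Inr b}" "(i,j) \<in> F" "(a,b) \<in> F"
      "(i,b) \<notin> F" "(a,j) \<notin> F" using conflict_char by blast
    show "c x \<noteq> c y"
    proof
      assume "c x = c y"
      then have eq: "((i,j) \<in> E1) = ((a,b) \<in> E1)" using h cv by (simp split: if_splits)
      have s1: "E1 \<subseteq> F" "E2 \<subseteq> F" using FE by auto
      show False
      proof (cases "(i,j) \<in> E1")
        case True
        then show False using nc[OF c1 s1(1), of i j a b] eq h by blast
      next
        case False
        then have "(i,j) \<in> E2" "(a,b) \<in> E2" using eq h FE by auto
        then show False using nc[OF c2 s1(2), of i j a b] h by blast
      qed
    qed
  qed
  then show ?thesis unfolding chromatic_number_def F_def by (rule Least_le)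
qed

end
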